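(* Let $F$ be a partially colored forest. If Alice can win the $3$-Reduced Coloring Game on $\mathcal{R}'(F)$, then Alice can win the $3$-coloring game on $F$.
   Context: A partial coloring assigns to some vertices colors from a set $C$ of $3$ colors so that adjacent colored vertices differ; a color is legal for an uncolored vertex $v$ if no neighbor of $v$ has it. The $k$-coloring game on a partially colored graph: Alice and Bob alternate, Alice first, each coloring an uncolored vertex with a legal color from a $k$-set of colors; Bob wins if at some point an uncolored vertex has no legal color, Alice wins if all vertices get colored. The $k$-Reduced Coloring Game ($k$-RCG) is the same except that: Alice may only color vertices of degree at least $k$; Alice wins once every vertex of degree at least $k$ is colored; Bob plays first; and Bob may pass. For a partially colored forest $F$, a trunk of $F$ is a maximal connected subgraph $R$ such that every colored vertex of $R$ is a leaf of $R$; $\mathcal{R}(F)$ is the partially colored forest formed by the disjoint union of all trunks of $F$ (a colored vertex lying in several trunks appears as a separate colored copy in each). For a graph $G$, $E_{>2}(G)$ is the set of edges $xy$ of $G$ with $d_G(x)>2$ or $d_G(y)>2$. The reduced graph of $F$ is $\mathcal{R}'(F)=\mathcal{R}(F)-\{xy: xy\notin E_{>2}(\mathcal{R}(F))\}$, i.e. $\mathcal{R}(F)$ with every edge both of whose endpoints have degree at most $2$ in $\mathcal{R}(F)$ deleted. *)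

theory Defs
  imports Main
begin

definition simple_graph :: "'v set \<Rightarrow> 'v set set \<Rightarrow> bool" where
  "simple_graph V E \<longleftrightarrow> finite V \<and>
     (\<forall>e\<in>E. \<exists>x y. x \<in> V \<and> y \<in> V \<and> x \<noteq> y \<and> e = {x, y})"

definition nbrs :: "'v set set \<Rightarrow> 'v \<Rightarrow> 'v set" where
  "nbrs E v = {u. {u, v} \<in> E}"

definition deg :: "'v set set \<Rightarrow> 'v \<Rightarrow> nat" where
  "deg E v = card (nbrs E v)"

definition is_cycle :: "'v set set \<Rightarrow> 'v list \<Rightarrow> bool" where
  "is_cycle E xs \<longleftrightarrow> length xs \<ge> 3 \<and> distinct xs \<and>
     (\<forall>i. Suc i < length xs \<longrightarrow> {xs ! i, xs ! Suc i} \<in> E) \<and> {last xs, hd xs} \<in> E"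

definition forest :: "'v set \<Rightarrow> 'v set set \<Rightarrow> bool" where
  "forest V E \<longleftrightarrow> simple_graph V E \<and> \<not> (\<exists>xs. is_cycle E xs)"

definition partial_coloring :: "'v set \<Rightarrow> 'v set set \<Rightarrow> 'c set \<Rightarrow> ('v \<Rightarrow> 'c option) \<Rightarrow> bool" where
  "partial_coloring V E C col \<longleftrightarrow>
     (\<forall>v a. col v = Some a \<longrightarrow> v \<in> V \<and> a \<in> C) \<and>
     (\<forall>x y. {x, y} \<in> E \<longrightarrow> x \<noteq> y \<longrightarrow> col x \<noteq> None \<longrightarrow> col x \<noteq> col y)"

definition legal :: "'v set set \<Rightarrow> 'c set \<Rightarrow> ('v \<Rightarrow> 'c option) \<Rightarrow> 'v \<Rightarrow> 'c \<Rightarrow> bool" where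
  "legal E C col v a \<longleftrightarrow> a \<in> C \<and> (\<forall>u\<in>nbrs E v. col u \<noteq> Some a)"

definition blocked :: "'v set \<Rightarrow> 'v set set \<Rightarrow> 'c set \<Rightarrow> ('v \<Rightarrow> 'c option) \<Rightarrow> bool" where
  "blocked V E C col \<longleftrightarrow> (\<exists>v\<in>V. col v = None \<and> (\<forall>a. \<not> legal E C col v a))"

text \<open>cg_win V E C t col: Alice has a winning strategy in the coloring game with color set C
  from position col, where t = True means Alice is to move and t = False means Bob is to move.\<close>
inductive cg_win :: "'v set \<Rightarrow> 'v set set \<Rightarrow> 'c set \<Rightarrow> bool \<Rightarrow> ('v \<Rightarrow> 'c option) \<Rightarrow> bool"
  for V E C where
  cg_done: "\<not> blocked V E C col \<Longrightarrow> (\<forall>v\<in>V. col v \<noteq> None) \<Longrightarrow> cg_win V E C t col"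
| cg_alice: "\<not> blocked V E C col \<Longrightarrow> v \<in> V \<Longrightarrow> col v = None \<Longrightarrow> legal E C col v a \<Longrightarrow>
     cg_win V E C False (col(v := Some a)) \<Longrightarrow> cg_win V E C True col"
| cg_bob: "\<not> blocked V E C col \<Longrightarrow> \<not> (\<forall>v\<in>V. col v \<noteq> None) \<Longrightarrow>
     (\<forall>v a. v \<in> V \<longrightarrow> col v = None \<longrightarrow> legal E C col v a \<longrightarrow>
        cg_win V E C True (col(v := Some a))) \<Longrightarrow> cg_win V E C False col"

text \<open>The k-Reduced Coloring Game: Alice may only color vertices of degree at least k,
  Alice wins once all vertices of degree at least k are colored, Bob may pass.
  t = True: Alice to move; t = False: Bob to move.\<close>
inductive rcg_win :: "nat \<Rightarrow> 'v set \<Rightarrow> 'v set set \<Rightarrow> 'c set \<Rightarrow> bool \<Rightarrow> ('v \<Rightarrow> 'c option) \<Rightarrow> bool"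
  for k V E C where
  rcg_done: "\<not> blocked V E C col \<Longrightarrow> (\<forall>v\<in>V. k \<le> deg E v \<longrightarrow> col v \<noteq> None) \<Longrightarrow>
     rcg_win k V E C t col"
| rcg_alice: "\<not> blocked V E C col \<Longrightarrow> v \<in> V \<Longrightarrow> k \<le> deg E v \<Longrightarrow> col v = None \<Longrightarrow>
     legal E C col v a \<Longrightarrow> rcg_win k V E C False (col(v := Some a)) \<Longrightarrow> rcg_win k V E C True col"
| rcg_bob: "\<not> blocked V E C col \<Longrightarrow> \<not> (\<forall>v\<in>V. k \<le> deg E v \<longrightarrow> col v \<noteq> None) \<Longrightarrow>
     rcg_win k V E C True col \<Longrightarrow>
     (\<forall>v a. v \<in> V \<longrightarrow> col v = None \<longrightarrow> legal E C col v a \<longrightarrow>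
        rcg_win k V E C True (col(v := Some a))) \<Longrightarrow> rcg_win k V E C False col"

definition alice_wins_cg :: "'v set \<Rightarrow> 'v set set \<Rightarrow> 'c set \<Rightarrow> ('v \<Rightarrow> 'c option) \<Rightarrow> bool" where
  "alice_wins_cg V E C col \<longleftrightarrow> cg_win V E C True col"

definition alice_wins_rcg :: "nat \<Rightarrow> 'v set \<Rightarrow> 'v set set \<Rightarrow> 'c set \<Rightarrow> ('v \<Rightarrow> 'c option) \<Rightarrow> bool" where
  "alice_wins_rcg k V E C col \<longleftrightarrow> rcg_win k V E C False col"

definition induced_edges :: "'v set set \<Rightarrow> 'v set \<Rightarrow> 'v set set" where
  "induced_edges E W = {e \<in> E. e \<subseteq> W}"

definition connected_on :: "'v set set \<Rightarrow> 'v set \<Rightarrow> bool" where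
  "connected_on E W \<longleftrightarrow> W \<noteq> {} \<and>
     (\<forall>x\<in>W. \<forall>y\<in>W. (x, y) \<in> {(a, b). a \<in> W \<and> b \<in> W \<and> {a, b} \<in> E}\<^sup>*)"

text \<open>Vertex sets of connected (necessarily induced, since F is a forest) subgraphs in which
  every colored vertex is a leaf (degree exactly 1).\<close>
definition trunk_candidate :: "'v set \<Rightarrow> 'v set set \<Rightarrow> ('v \<Rightarrow> 'c option) \<Rightarrow> 'v set \<Rightarrow> bool" where
  "trunk_candidate V E col W \<longleftrightarrow> W \<subseteq> V \<and> connected_on E W \<and>
     (\<forall>v\<in>W. col v \<noteq> None \<longrightarrow> deg (induced_edges E W) v = 1)"

definition trunk :: "'v set \<Rightarrow> 'v set set \<Rightarrow> ('v \<Rightarrow> 'c option) \<Rightarrow> 'v set \<Rightarrow> bool" where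
  "trunk V E col W \<longleftrightarrow> trunk_candidate V E col W \<and>
     (\<forall>W'. trunk_candidate V E col W' \<longrightarrow> W \<subseteq> W' \<longrightarrow> W' = W)"

text \<open>R(F): disjoint union of the trunks; vertex v of trunk W becomes (W, v).\<close>
definition RV :: "'v set \<Rightarrow> 'v set set \<Rightarrow> ('v \<Rightarrow> 'c option) \<Rightarrow> ('v set \<times> 'v) set" where
  "RV V E col = {(W, v). trunk V E col W \<and> v \<in> W}"

definition RE :: "'v set \<Rightarrow> 'v set set \<Rightarrow> ('v \<Rightarrow> 'c option) \<Rightarrow> ('v set \<times> 'v) set set" where
  "RE V E col = {{(W, x), (W, y)} | W x y. trunk V E col W \<and> x \<in> W \<and> y \<in> W \<and> {x, y} \<in> E}"

definition Rcol :: "('v \<Rightarrow> 'c option) \<Rightarrow> ('v set \<times> 'v) \<Rightarrow> 'c option" where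
  "Rcol col = (\<lambda>(W, v). col v)"

definition R'E :: "'v set \<Rightarrow> 'v set set \<Rightarrow> ('v \<Rightarrow> 'c option) \<Rightarrow> ('v set \<times> 'v) set set" where
  "R'E V E col = {e \<in> RE V E col. \<exists>p\<in>e. deg (RE V E col) p > 2}"

end

theory Submission
  imports Defs
begin



definition dpath :: "('a \<times> 'a) set \<Rightarrow> 'a list \<Rightarrow> bool" where
 "dpath R xs \<longleftrightarrow> xs \<noteq> [] \<and> distinct xs \<and> (\<forall>i. Suc i < length xs \<longrightarrow> (xs!i, xs!Suc i) \<in> R)"

lemma dpath_exists:
  assumes "(a,b) \<in> R\<^sup>*"
  shows "\<exists>xs. dpath R xs \<and> hd xs = a \<and> last xs = b"
  using assms
proof (induction rule: converse_rtrancl_induct)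
  case base
  then show ?case by (rule exI[of _ "[b]"]) (auto simp: dpath_def)
next
  case (step a y)
  then obtain xs where xs: "dpath R xs" "hd xs = y" "last xs = b" by blast
  show ?case
  proof (cases "a \<in> set xs")
    case True
    then obtain k where k: "k < length xs" "xs!k = a" by (auto simp: in_set_conv_nth)
    have "dpath R (drop k xs)" using xs(1) k unfolding dpath_def
    proof (intro conjI allI impI)
      fix i assume "Suc i < length (drop k xs)"
      moreover have "\<forall>i. Suc i < length xs \<longrightarrow> (xs!i, xs!Suc i) \<in> R" using xs(1) by (simp add: dpath_def)
      ultimately show "(drop k xs ! i, drop k xs ! Suc i) \<in> R" using k
      proof -
        have "Suc (k+i) < length xs" using \<open>Suc i < length (drop k xs)\<close> by simp
        then have "(xs!(k+i), xs!Suc(k+i)) \<in> R" using xs(1) by (simp add: dpath_def)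
        then show ?thesis using k by simp
      qed
    qed auto
    moreover have "hd (drop k xs) = a" using k by (simp add: hd_drop_conv_nth)
    moreover have "last (drop k xs) = b" using k xs by simp
    ultimately show ?thesis by blast
  next
    case False
    have "dpath R (a # xs)" unfolding dpath_def
    proof (intro conjI allI impI)
      fix i assume i: "Suc i < length (a # xs)"
      show "((a # xs) ! i, (a # xs) ! Suc i) \<in> R"
      proof (cases i)
        case 0
        then show ?thesis using xs(1,2) step(1) by (simp add: dpath_def hd_conv_nth)
      next
        case (Suc j)
        then show ?thesis using xs(1) i by (simp add: dpath_def)
      qed
    qed (use xs(1) False in \<open>auto simp: dpath_def\<close>)
    then show ?thesis using xs by (intro exI[of _ "a#xs"]) (auto simp: dpath_def)
  qed
qed




definition wrel :: "'v set set \<Rightarrow> 'v set \<Rightarrow> ('v \<times> 'v) set" where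
  "wrel E W = {(a, b). a \<in> W \<and> b \<in> W \<and> {a, b} \<in> E}"

lemma connected_on_wrel: "connected_on E W \<longleftrightarrow> W \<noteq> {} \<and> (\<forall>x\<in>W. \<forall>y\<in>W. (x,y) \<in> (wrel E W)\<^sup>*)"
  by (simp add: connected_on_def wrel_def)

lemma nbrs_induced: "nbrs (induced_edges E W) c = {x. {x,c} \<in> E \<and> x \<in> W \<and> c \<in> W}"
  by (auto simp: nbrs_def induced_edges_def)

context
  fixes V :: "'v set" and E :: "'v set set" and col :: "'v \<Rightarrow> 'c option"
  assumes forest: "forest V E"
begin

lemma sg: "simple_graph V E" using forest by (simp add: forest_def)
lemma finV: "finite V" using sg by (simp add: simple_graph_def)

lemma edgeD: assumes "{u,v} \<in> E" shows "u \<in> V" "v \<in> V" "u \<noteq> v"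
proof -
  obtain x y where "x \<in> V" "y \<in> V" "x \<noteq> y" "{u,v} = {x,y}" using sg assms by (auto simp: simple_graph_def)
  then show "u \<in> V" "v \<in> V" "u \<noteq> v" by (auto simp: doubleton_eq_iff)
qed

lemma nbrs_sub: "nbrs E v \<subseteq> V" using edgeD by (auto simp: nbrs_def)
lemma nbrs_fin: "finite (nbrs E v)" using nbrs_sub finV finite_subset by blast

lemma bridge:
  assumes e: "{a,b} \<in> E" and w: "(a,b) \<in> {(p,q). {p,q} \<in> E \<and> {p,q} \<noteq> {a,b}}\<^sup>*"
  shows False
proof -
  let ?R = "{(p,q). {p,q} \<in> E \<and> {p,q} \<noteq> {a,b}}"
  obtain xs where xs: "dpath ?R xs" "hd xs = a" "last xs = b" using dpath_exists[OF w] by blast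
  have ab: "a \<noteq> b" using edgeD[OF e] by simp
  have ne: "xs \<noteq> []" using xs by (simp add: dpath_def)
  have h0: "xs!0 = a" using xs ne by (simp add: hd_conv_nth)
  have hl: "xs!(length xs - 1) = b" using xs ne by (simp add: last_conv_nth)
  have "length xs \<noteq> 1" using h0 hl ab by (metis diff_self_eq_0)
  moreover have "length xs > 0" using ne by simp
  ultimately have l2: "length xs \<ge> 2" by linarith
  show False
  proof (cases "length xs = 2")
    case True
    then have "(xs!0, xs!Suc 0) \<in> ?R" using xs(1) by (simp add: dpath_def)
    moreover have "xs!Suc 0 = b" using hl True by simp
    ultimately show False using h0 by simp
  next
    case False
    have "is_cycle E xs" unfolding is_cycle_def
    proof (intro conjI allI impI)
      show "3 \<le> length xs" using False l2 by simp
      show "distinct xs" using xs by (simp add: dpath_def)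
      fix i assume "Suc i < length xs"
      then show "{xs ! i, xs ! Suc i} \<in> E" using xs(1) by (auto simp: dpath_def)
    next
      show "{last xs, hd xs} \<in> E" using xs e by (simp add: insert_commute)
    qed
    then show False using forest by (auto simp: forest_def)
  qed
qed

lemma walk_avoid:
  assumes "(x,y) \<in> (wrel E W)\<^sup>*" "u \<notin> W"
  shows "(x,y) \<in> {(p,q). {p,q} \<in> E \<and> {p,q} \<noteq> {u,z}}\<^sup>*"
proof -
  have "wrel E W \<subseteq> {(p,q). {p,q} \<in> E \<and> {p,q} \<noteq> {u,z}}"
    using assms(2) by (auto simp: wrel_def doubleton_eq_iff)
  then show ?thesis using assms(1) rtrancl_mono by blast
qed

lemma conn_insert:
  assumes c: "connected_on E W" and v: "v \<in> W" and e: "{u,v} \<in> E"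
  shows "connected_on E (insert u W)"
proof -
  let ?R = "wrel E (insert u W)"
  have sub: "(wrel E W)\<^sup>* \<subseteq> ?R\<^sup>*" by (rule rtrancl_mono) (auto simp: wrel_def)
  have uv: "(u,v) \<in> ?R" "(v,u) \<in> ?R" using e v by (auto simp: wrel_def insert_commute)
  have W: "\<forall>x\<in>W. \<forall>y\<in>W. (x,y) \<in> ?R\<^sup>*" using c sub by (auto simp: connected_on_wrel)
  have "\<forall>x\<in>insert u W. \<forall>y\<in>insert u W. (x,y) \<in> ?R\<^sup>*"
  proof (intro ballI)
    fix x y assume x: "x \<in> insert u W" and y: "y \<in> insert u W"
    have xv: "(x,v) \<in> ?R\<^sup>*" using x W v uv by auto
    have vy: "(v,y) \<in> ?R\<^sup>*" using y W v uv by auto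
    show "(x,y) \<in> ?R\<^sup>*" using xv vy by (rule rtrancl_trans)
  qed
  then show ?thesis by (simp add: connected_on_wrel)
qed

lemma trunk_nbr:
  assumes t: "trunk V E col W" and v: "v \<in> W" "col v = None" and e: "{u,v} \<in> E"
  shows "u \<in> W"
proof (rule ccontr)
  assume u: "u \<notin> W"
  have tc: "trunk_candidate V E col W" using t by (simp add: trunk_def)
  have cW: "connected_on E W" using tc by (simp add: trunk_candidate_def)
  have WV: "W \<subseteq> V" using tc by (simp add: trunk_candidate_def)
  have cand: "trunk_candidate V E col (insert u W)"
    unfolding trunk_candidate_def
  proof (intro conjI ballI impI)
    show "insert u W \<subseteq> V" using WV edgeD[OF e] by auto
    show "connected_on E (insert u W)" using conn_insert[OF cW v(1) e] .
    fix c assume c: "c \<in> insert u W" "col c \<noteq> None"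
    show "deg (induced_edges E (insert u W)) c = 1"
    proof (cases "c = u")
      case True
      have "nbrs (induced_edges E (insert u W)) c = {v}"
      proof (rule set_eqI, rule iffI)
        fix x assume "x \<in> nbrs (induced_edges E (insert u W)) c"
        then have x: "{x,u} \<in> E" "x \<in> insert u W" using True by (auto simp: nbrs_induced)
        have "x \<noteq> u" using edgeD[OF x(1)] by simp
        then have xW: "x \<in> W" using x by simp
        show "x \<in> {v}"
        proof (rule ccontr)
          assume "x \<notin> {v}"
          have "(v,x) \<in> (wrel E W)\<^sup>*" using cW v xW by (simp add: connected_on_wrel)
          then have "(v,x) \<in> {(p,q). {p,q} \<in> E \<and> {p,q} \<noteq> {v,u}}\<^sup>*"
            using walk_avoid[OF _ u, of v x v] by (simp add: insert_commute)
          moreover have "(x,u) \<in> {(p,q). {p,q} \<in> E \<and> {p,q} \<noteq> {v,u}}"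
            using x(1) \<open>x \<notin> {v}\<close> \<open>x \<noteq> u\<close> by (auto simp: doubleton_eq_iff)
          ultimately have "(v,u) \<in> {(p,q). {p,q} \<in> E \<and> {p,q} \<noteq> {v,u}}\<^sup>*" by (rule rtrancl_into_rtrancl)
          then show False using bridge[of v u] e by (simp add: insert_commute)
        qed
      next
        fix x assume "x \<in> {v}"
        then show "x \<in> nbrs (induced_edges E (insert u W)) c"
          using True e v by (auto simp: nbrs_induced insert_commute)
      qed
      then show ?thesis by (simp add: deg_def)
    next
      case False
      then have cW': "c \<in> W" using c by simp
      have "nbrs (induced_edges E (insert u W)) c = nbrs (induced_edges E W) c"
      proof (rule set_eqI, rule iffI)
        fix x assume "x \<in> nbrs (induced_edges E (insert u W)) c"
        then have x: "{x,c} \<in> E" "x \<in> insert u W" by (auto simp: nbrs_induced)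
        show "x \<in> nbrs (induced_edges E W) c"
        proof (cases "x = u")
          case True
          have vc: "v \<noteq> c" using v c by auto
          have "(v,c) \<in> (wrel E W)\<^sup>*" using cW v cW' by (simp add: connected_on_wrel)
          then have "(v,c) \<in> {(p,q). {p,q} \<in> E \<and> {p,q} \<noteq> {u,c}}\<^sup>*"
            using walk_avoid[OF _ u] by simp
          moreover have "(u,v) \<in> {(p,q). {p,q} \<in> E \<and> {p,q} \<noteq> {u,c}}"
            using e vc by (auto simp: doubleton_eq_iff)
          ultimately have "(u,c) \<in> {(p,q). {p,q} \<in> E \<and> {p,q} \<noteq> {u,c}}\<^sup>*"
            by (meson converse_rtrancl_into_rtrancl)
          then show ?thesis using bridge[of u c] x True by simp
        next
          case False
          then show ?thesis using x cW' by (simp add: nbrs_induced)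
        qed
      next
        fix x assume "x \<in> nbrs (induced_edges E W) c"
        then show "x \<in> nbrs (induced_edges E (insert u W)) c" by (auto simp: nbrs_induced)
      qed
      then show ?thesis using tc cW' c(2) by (simp add: deg_def trunk_candidate_def)
    qed
  qed
  then have "insert u W = W" using t by (auto simp: trunk_def)
  then show False using u by auto
qed

end



context
  fixes V :: "'v set" and E :: "'v set set" and col :: "'v \<Rightarrow> 'c option"
  assumes forest: "forest V E"
begin

lemma trunk_exists:
  assumes v: "v \<in> V" "col v = None"
  shows "\<exists>W. trunk V E col W \<and> v \<in> W"
proof -
  let ?S = "{W. trunk_candidate V E col W \<and> v \<in> W}"
  have "?S \<subseteq> Pow V" by (auto simp: trunk_candidate_def)
  then have fin: "finite ?S" using finV[OF forest] by (meson finite_Pow_iff finite_subset)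
  have "{v} \<in> ?S" using v
    by (auto simp: trunk_candidate_def connected_on_def)
  then have ne: "card ` ?S \<noteq> {}" by blast
  obtain W where W: "W \<in> ?S" "card W = Max (card ` ?S)"
    using Max_in[OF finite_imageI[OF fin] ne] by auto
  have "trunk V E col W" unfolding trunk_def
  proof (intro conjI allI impI)
    show "trunk_candidate V E col W" using W by simp
    fix W' assume W': "trunk_candidate V E col W'" "W \<subseteq> W'"
    then have "W' \<in> ?S" using W by auto
    then have "card W' \<le> card W" using W fin by simp
    moreover have "finite W'" using W' finV[OF forest] finite_subset by (auto simp: trunk_candidate_def)
    moreover have "card W \<le> card W'" using card_mono[OF \<open>finite W'\<close> W'(2)] .
    ultimately have "card W = card W'" by simp
    then show "W' = W" using card_subset_eq[OF \<open>finite W'\<close> W'(2)] by simp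
  qed
  then show ?thesis using W by auto
qed

lemma trunk_interior:
  assumes t: "trunk V E col W" and e: "{a,c} \<in> E" "{c,b} \<in> E" and ab: "a \<noteq> b"
    and W: "a \<in> W" "b \<in> W" "c \<in> W" and cc: "col c \<noteq> None"
  shows False
proof -
  have "deg (induced_edges E W) c = 1" using t W cc by (auto simp: trunk_def trunk_candidate_def)
  then obtain z where z: "nbrs (induced_edges E W) c = {z}" by (auto simp: deg_def card_1_singleton_iff)
  have "a \<in> nbrs (induced_edges E W) c" "b \<in> nbrs (induced_edges E W) c"
    using e W by (auto simp: nbrs_induced insert_commute)
  then show False using z ab by auto
qed

end


context
  fixes V :: "'v set" and E :: "'v set set" and col :: "'v \<Rightarrow> 'c option"
  assumes forest: "forest V E"
begin
lemma trunk_unique: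
  assumes t1: "trunk V E col W1" and t2: "trunk V E col W2" and v: "v \<in> W1" "v \<in> W2" "col v = None"
  shows "W1 = W2"
proof -
  have "W1 \<subseteq> W2"
  proof
    fix q assume q: "q \<in> W1"
    have vq: "(v,q) \<in> (wrel E W1)\<^sup>*" using t1 v q
      by (simp add: trunk_def trunk_candidate_def connected_on_wrel)
    obtain xs where xs: "dpath (wrel E W1) xs" "hd xs = v" "last xs = q"
      using dpath_exists[OF vq] by blast
    have ne: "xs \<noteq> []" using xs by (simp add: dpath_def)
    have step: "\<And>i. Suc i < length xs \<Longrightarrow> xs!i \<in> W1 \<and> xs!Suc i \<in> W1 \<and> {xs!i, xs!Suc i} \<in> E"
      using xs(1) by (auto simp: dpath_def wrel_def)
    have "\<forall>i. i < length xs \<longrightarrow> xs!i \<in> W2"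
    proof (intro allI)
      fix i show "i < length xs \<longrightarrow> xs!i \<in> W2"
      proof (induction i)
        case 0
        then show ?case using xs ne v by (simp add: hd_conv_nth[symmetric])
      next
        case (Suc i)
        show ?case
        proof
          assume si: "Suc i < length xs"
          have iW: "xs!i \<in> W2" using Suc si by simp
          have ci: "col (xs!i) = None"
          proof (cases i)
            case 0
            then show ?thesis using xs ne v by (simp add: hd_conv_nth[symmetric])
          next
            case (Suc j)
            have d: "distinct xs" using xs by (simp add: dpath_def)
            have jl: "j < length xs" using si Suc by simp
            have ne: "xs!j \<noteq> xs!Suc i" using nth_eq_iff_index_eq[OF d jl si] Suc by simp
            have a1: "{xs!j, xs!i} \<in> E" "xs!j \<in> W1" using step[of j] si Suc by auto
            have a2: "{xs!i, xs!Suc i} \<in> E" "xs!i \<in> W1" "xs!Suc i \<in> W1" using step[of i] si by auto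
            show ?thesis
            proof (rule ccontr)
              assume "col (xs!i) \<noteq> None"
              then show False using trunk_interior[OF forest t1 a1(1) a2(1) ne a1(2) a2(3) a2(2)] by simp
            qed
          qed
          have "{xs!Suc i, xs!i} \<in> E" using step[OF si] by (simp add: insert_commute)
          then show "xs!Suc i \<in> W2" using trunk_nbr[OF forest t2 iW ci] by simp
        qed
      qed
    qed
    then have "xs!(length xs - 1) \<in> W2" using ne by simp
    then show "q \<in> W2" using xs(3) ne by (simp add: last_conv_nth)
  qed
  moreover have "trunk_candidate V E col W2" using t2 by (simp add: trunk_def)
  ultimately show ?thesis using t1 unfolding trunk_def by blast
qed

end


context
  fixes V :: "'v set" and E :: "'v set set" and col :: "'v \<Rightarrow> 'c option"
  assumes forest: "forest V E"
begin
lemma nbrs_RE: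
  assumes t: "trunk V E col W" and v: "v \<in> W"
  shows "nbrs (RE V E col) (W,v) = Pair W ` {u. u \<in> W \<and> {u,v} \<in> E}"
proof (rule set_eqI, rule iffI)
  fix p assume "p \<in> nbrs (RE V E col) (W,v)"
  then obtain W' x y where h: "{p,(W,v)} = {(W',x),(W',y)}" "trunk V E col W'" "x \<in> W'" "y \<in> W'" "{x,y} \<in> E"
    by (auto simp: nbrs_def RE_def)
  then show "p \<in> Pair W ` {u. u \<in> W \<and> {u,v} \<in> E}"
    by (auto simp: doubleton_eq_iff insert_commute)
next
  fix p assume "p \<in> Pair W ` {u. u \<in> W \<and> {u,v} \<in> E}"
  then obtain u where "p = (W,u)" "u \<in> W" "{u,v} \<in> E" by auto
  moreover have "{(W,u),(W,v)} \<in> RE V E col" unfolding RE_def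
    by (rule CollectI, rule exI[of _ W], rule exI[of _ u], rule exI[of _ v]) (use t v \<open>u \<in> W\<close> \<open>{u,v} \<in> E\<close> in simp)
  ultimately show "p \<in> nbrs (RE V E col) (W,v)" by (simp add: nbrs_def)
qed

lemma nbrs_RE_unc:
  assumes t: "trunk V E col W" and v: "v \<in> W" "col v = None"
  shows "nbrs (RE V E col) (W,v) = Pair W ` nbrs E v"
proof -
  have "{u. u \<in> W \<and> {u,v} \<in> E} = nbrs E v"
    using trunk_nbr[OF forest t v] by (auto simp: nbrs_def)
  then show ?thesis using nbrs_RE[OF t v(1)] by simp
qed

lemma deg_RE_unc:
  assumes t: "trunk V E col W" and v: "v \<in> W" "col v = None"
  shows "deg (RE V E col) (W,v) = deg E v"
  using nbrs_RE_unc[OF assms] by (simp add: deg_def card_image inj_on_def)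

lemma nbrs_R'E_sub: "nbrs (R'E V E col) p \<subseteq> nbrs (RE V E col) p"
  by (auto simp: nbrs_def R'E_def)

lemma nbrs_R'E_big:
  assumes "deg (RE V E col) p > 2"
  shows "nbrs (R'E V E col) p = nbrs (RE V E col) p"
  using assms by (auto simp: nbrs_def R'E_def)

lemma deg_R'E_unc:
  assumes t: "trunk V E col W" and v: "v \<in> W" "col v = None"
  shows "deg (R'E V E col) (W,v) \<le> deg E v"
    and "deg E v \<ge> 3 \<Longrightarrow> nbrs (R'E V E col) (W,v) = Pair W ` nbrs E v"
    and "deg E v \<ge> 3 \<Longrightarrow> deg (R'E V E col) (W,v) = deg E v"
proof -
  have f: "finite (nbrs (RE V E col) (W,v))" using nbrs_RE_unc[OF assms] nbrs_fin[OF forest] by simp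
  show "deg (R'E V E col) (W,v) \<le> deg E v"
    using card_mono[OF f nbrs_R'E_sub] deg_RE_unc[OF assms] by (simp add: deg_def)
  assume "deg E v \<ge> 3"
  then have "deg (RE V E col) (W,v) > 2" using deg_RE_unc[OF assms] by simp
  then show "nbrs (R'E V E col) (W,v) = Pair W ` nbrs E v"
    using nbrs_R'E_big nbrs_RE_unc[OF assms] by simp
  then show "deg (R'E V E col) (W,v) = deg E v"
    by (simp add: deg_def card_image inj_on_def)
qed

end



context
  fixes V :: "'v set" and E :: "'v set set" and C :: "'c set" and col :: "'v \<Rightarrow> 'c option"
  assumes forest: "forest V E" and C3: "card C = 3"
begin

lemma legal_small:
  assumes "deg E v \<le> 2"
  shows "\<exists>a. legal E C c' v a"
proof -
  let ?F = "(\<lambda>u. the (c' u)) ` nbrs E v"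
  have "card ?F \<le> 2" using card_image_le[OF nbrs_fin[OF forest, of v], of "\<lambda>u. the (c' u)"] assms by (simp add: deg_def)
  have finC: "finite C" using C3 by (metis card.infinite zero_neq_numeral)
  have "\<not> C \<subseteq> ?F"
  proof
    assume "C \<subseteq> ?F"
    then have "card C \<le> card ?F" using card_mono[OF finite_imageI[OF nbrs_fin[OF forest]]] by blast
    then show False using C3 \<open>card ?F \<le> 2\<close> by simp
  qed
  then obtain a where a: "a \<in> C" "a \<notin> ?F" by blast
  have "legal E C c' v a" unfolding legal_def
  proof (intro conjI ballI)
    show "a \<in> C" by fact
    fix u assume "u \<in> nbrs E v"
    then show "c' u \<noteq> Some a" using a(2) by force
  qed
  then show ?thesis by blast
qed

lemma endgame:
  assumes "\<forall>v\<in>V. c' v = None \<longrightarrow> deg E v \<le> 2"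
  shows "cg_win V E C t c'"
  using assms
proof (induction "card {v\<in>V. c' v = None}" arbitrary: c' t rule: less_induct)
  case less
  have nb: "\<not> blocked V E C c'" using less.prems legal_small by (auto simp: blocked_def)
  show ?case
  proof (cases "\<forall>v\<in>V. c' v \<noteq> None")
    case True
    then show ?thesis by (rule cg_done[OF nb])
  next
    case False
    have finU: "finite {v\<in>V. c' v = None}" using finV[OF forest] by simp
    have rec: "cg_win V E C t' (c'(v := Some a))" if v: "v \<in> V" "c' v = None" for v a t'
    proof -
      have eq: "{x\<in>V. (c'(v := Some a)) x = None} = {x\<in>V. c' x = None} - {v}" by auto
      have "card ({x\<in>V. c' x = None} - {v}) < card {x\<in>V. c' x = None}"
        using v finU by (intro card_Diff1_less) auto
      then have lt: "card {x\<in>V. (c'(v := Some a)) x = None} < card {x\<in>V. c' x = None}"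
        by (simp only: eq)
      have "\<forall>x\<in>V. (c'(v := Some a)) x = None \<longrightarrow> deg E x \<le> 2" using less.prems by auto
      then show ?thesis by (rule less.hyps[OF lt])
    qed
    show ?thesis
    proof (cases t)
      case True
      obtain v where v: "v \<in> V" "c' v = None" using False by blast
      obtain a where a: "legal E C c' v a" using legal_small less.prems v by blast
      show ?thesis using cg_alice[OF nb v a rec[OF v]] True by simp
    next
      case False': False
      have "cg_win V E C False c'"
        using nb False by (intro cg_bob) (simp_all add: rec)
      then show ?thesis using False' by simp
    qed
  qed
qed

abbreviation "RVs \<equiv> RV V E col"
abbreviation "RR \<equiv> R'E V E col"

lemma RV_mem: "(W,x) \<in> RV V E col \<longleftrightarrow> trunk V E col W \<and> x \<in> W"
  by (simp add: RV_def)

lemma legal_A: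
  assumes t: "trunk V E col W" and v: "v \<in> W" "col v = None" and d: "deg E v \<ge> 3"
    and ag: "\<forall>W x. (W,x) \<in> RVs \<longrightarrow> p (W,x) = c' x"
    and l: "legal RR C p (W,v) a"
  shows "legal E C c' v a"
  unfolding legal_def
proof (intro conjI ballI)
  show "a \<in> C" using l by (simp add: legal_def)
  fix u assume u: "u \<in> nbrs E v"
  have "(W,u) \<in> nbrs RR (W,v)" using deg_R'E_unc(2)[OF forest t v d] u by simp
  then have "p (W,u) \<noteq> Some a" using l by (simp add: legal_def)
  moreover have "u \<in> W" using trunk_nbr[OF forest t v] u by (simp add: nbrs_def)
  ultimately show "c' u \<noteq> Some a" using ag t by (simp add: RV_mem)
qed

lemma legal_B:
  assumes t: "trunk V E col W" and v: "v \<in> W"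
    and ag: "\<forall>W x. (W,x) \<in> RVs \<longrightarrow> p (W,x) = c' x"
    and l: "legal E C c' v a"
  shows "legal RR C p (W,v) a"
  unfolding legal_def
proof (intro conjI ballI)
  show "a \<in> C" using l by (simp add: legal_def)
  fix q assume "q \<in> nbrs RR (W,v)"
  then have "q \<in> nbrs (RE V E col) (W,v)" using nbrs_R'E_sub[OF forest] by blast
  then obtain u where u: "q = (W,u)" "u \<in> W" "{u,v} \<in> E" using nbrs_RE[OF forest t v] by auto
  have "c' u \<noteq> Some a" using l u by (simp add: legal_def nbrs_def)
  then show "p q \<noteq> Some a" using ag t u by (simp add: RV_mem)
qed

lemma nb_transfer:
  assumes nb: "\<not> blocked RVs RR C p"
    and ext: "\<forall>v. c' v = None \<longrightarrow> col v = None"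
    and ag: "\<forall>W x. (W,x) \<in> RVs \<longrightarrow> p (W,x) = c' x"
  shows "\<not> blocked V E C c'"
proof
  assume "blocked V E C c'"
  then obtain v where v: "v \<in> V" "c' v = None" "\<forall>a. \<not> legal E C c' v a" by (auto simp: blocked_def)
  show False
  proof (cases "deg E v \<le> 2")
    case True
    then show False using legal_small v by blast
  next
    case False
    have cv: "col v = None" using ext v by simp
    obtain W where W: "trunk V E col W" "v \<in> W" using trunk_exists[OF forest, of v col] v(1) cv by blast
    have "(W,v) \<in> RVs" "p (W,v) = None" using W ag v by (auto simp: RV_mem)
    then obtain a where "legal RR C p (W,v) a" using nb by (auto simp: blocked_def)
    then have "legal E C c' v a" using legal_A[OF W cv _ ag] False by simp
    then show False using v by blast
  qed
qed

end



context
  fixes V :: "'v set" and E :: "'v set set" and C :: "'c set" and col :: "'v \<Rightarrow> 'c option"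
  assumes forest: "forest V E" and C3: "card C = 3"
begin

lemma G:
  assumes "rcg_win 3 (RV V E col) (R'E V E col) C t p"
  shows "(\<forall>v. c' v = None \<longrightarrow> col v = None) \<Longrightarrow>
         (\<forall>W x. (W,x) \<in> RV V E col \<longrightarrow> p (W,x) = c' x) \<Longrightarrow> cg_win V E C t c'"
  using assms
proof (induction arbitrary: c' rule: rcg_win.induct)
  case (rcg_done p t)
  show ?case
  proof (rule endgame[OF forest C3], intro ballI impI)
    fix v assume v: "v \<in> V" "c' v = None"
    show "deg E v \<le> 2"
    proof (rule ccontr)
      assume d: "\<not> deg E v \<le> 2"
      have cv: "col v = None" using rcg_done.prems v by simp
      obtain W where W: "trunk V E col W" "v \<in> W" using trunk_exists[OF forest, of v col] v(1) cv by blast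
      have "deg (R'E V E col) (W,v) = deg E v" using deg_R'E_unc(3)[OF forest W cv] d by simp
      then have d3: "3 \<le> deg (R'E V E col) (W,v)" using d by simp
      have mem: "(W,v) \<in> RV V E col" using W by (simp add: RV_def)
      have "p (W,v) \<noteq> None" using rcg_done.hyps(2) mem d3 by blast
      then show False using rcg_done.prems W v by (simp add: RV_def)
    qed
  qed
next
  case (rcg_alice p w a)
  obtain W v where w: "w = (W,v)" by (cases w)
  have W: "trunk V E col W" "v \<in> W" using rcg_alice.hyps(2) w by (auto simp: RV_def)
  have cv': "c' v = None" using rcg_alice.hyps(4) rcg_alice.prems(2) W w by (simp add: RV_def)
  have cv: "col v = None" using rcg_alice.prems(1) cv' by simp
  have vV: "v \<in> V" using W by (auto simp: trunk_def trunk_candidate_def)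
  have d: "deg E v \<ge> 3" using rcg_alice.hyps(3) deg_R'E_unc(1)[OF forest W cv] w by simp
  have l: "legal E C c' v a" using legal_A[OF forest C3 W cv d rcg_alice.prems(2)] rcg_alice.hyps(5) w by simp
  have nb: "\<not> blocked V E C c'" using nb_transfer[OF forest C3 rcg_alice.hyps(1) rcg_alice.prems] .
  have ag: "\<forall>W' x. (W',x) \<in> RV V E col \<longrightarrow> (p(w := Some a)) (W',x) = (c'(v := Some a)) x"
  proof (intro allI impI)
    fix W' x assume x: "(W',x) \<in> RV V E col"
    show "(p(w := Some a)) (W',x) = (c'(v := Some a)) x"
    proof (cases "x = v")
      case True
      then have "W' = W" using trunk_unique[OF forest, of col W' W v] x W cv by (simp add: RV_def)
      then show ?thesis using True w by simp
    next
      case False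
      then show ?thesis using rcg_alice.prems(2) x w by simp
    qed
  qed
  have ext: "\<forall>u. (c'(v := Some a)) u = None \<longrightarrow> col u = None" using rcg_alice.prems(1) by auto
  have "cg_win V E C False (c'(v := Some a))"
    using rcg_alice.IH[OF ext ag] .
  then show ?case using cg_alice[OF nb vV cv' l] by simp
next
  case (rcg_bob p)
  have nb: "\<not> blocked V E C c'" using nb_transfer[OF forest C3 rcg_bob.hyps(1) rcg_bob.prems] .
  show ?case
  proof (cases "\<forall>v\<in>V. c' v \<noteq> None")
    case True
    then show ?thesis by (rule cg_done[OF nb])
  next
    case False
    show ?thesis
    proof (rule cg_bob[OF nb False], intro allI impI)
      fix v a assume v: "v \<in> V" "c' v = None" "legal E C c' v a"
      have cv: "col v = None" using rcg_bob.prems(1) v by simp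
      obtain W where W: "trunk V E col W" "v \<in> W" using trunk_exists[OF forest, of v col] v(1) cv by blast
      have mem: "(W,v) \<in> RV V E col" using W by (simp add: RV_def)
      have pv: "p (W,v) = None" using rcg_bob.prems(2) mem v by simp
      have l: "legal (R'E V E col) C p (W,v) a" using legal_B[OF forest C3 W rcg_bob.prems(2) v(3)] .
      have ag: "\<forall>W' x. (W',x) \<in> RV V E col \<longrightarrow> (p((W,v) := Some a)) (W',x) = (c'(v := Some a)) x"
      proof (intro allI impI)
        fix W' x assume x: "(W',x) \<in> RV V E col"
        show "(p((W,v) := Some a)) (W',x) = (c'(v := Some a)) x"
        proof (cases "x = v")
          case True
          then have "W' = W" using trunk_unique[OF forest, of col W' W v] x W cv by (simp add: RV_def)
          then show ?thesis using True by simp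
        next
          case False
          then show ?thesis using rcg_bob.prems(2) x by simp
        qed
      qed
      have ext: "\<forall>u. (c'(v := Some a)) u = None \<longrightarrow> col u = None" using rcg_bob.prems(1) by auto
      note ih = rcg_bob.IH(2)[rule_format, OF mem pv l]
      have "cg_win V E C True (c'(v := Some a))"
        using ih ext ag by blast
      then show "cg_win V E C True (c'(v := Some a))" .
    qed
  qed
qed

lemma main:
  assumes "alice_wins_rcg 3 (RV V E col) (R'E V E col) C (Rcol col)"
  shows "alice_wins_cg V E C col"
proof -
  have r: "rcg_win 3 (RV V E col) (R'E V E col) C False (Rcol col)" using assms by (simp add: alice_wins_rcg_def)
  have "rcg_win 3 (RV V E col) (R'E V E col) C True (Rcol col)"
    using r
  proof (cases rule: rcg_win.cases)
    case rcg_done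
    then show ?thesis by (intro rcg_win.rcg_done) auto
  next
    case rcg_bob
    then show ?thesis by simp
  next
    case rcg_alice
    then show ?thesis by simp
  qed
  then have "cg_win V E C True col" by (rule G) (simp_all add: Rcol_def)
  then show ?thesis by (simp add: alice_wins_cg_def)
qed

end


theorem lemma6p1:
  fixes V :: "'v set" and E :: "'v set set" and C :: "'c set" and col :: "'v \<Rightarrow> 'c option"
  assumes "forest V E"
    and "card C = 3"
    and "partial_coloring V E C col"
    and "alice_wins_rcg 3 (RV V E col) (R'E V E col) C (Rcol col)"
  shows "alice_wins_cg V E C col"
  using main[OF assms(1,2,4)] .

end
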